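(* Let $1\le p\le2$, $A\in\mathbb{R}^{m\times n}$, let $\bar{x}\in\mathbb{R}^n$ have exactly $S\ge1$ nonzero groups, $b:=A\bar{x}$, and suppose the $(p,1)$-GREC$(S,S)$ holds. Let $\lambda>0$ and let $x^*$ be a global minimizer of $\|Ax-b\|_2^2+\lambda\|x\|_{p,1}$. Then $\|x^*-\bar{x}\|_2^2\le 2\lambda^2S/\phi_{p,1}^4(S,S)$; in particular $\|x^*-\bar{x}\|_2^2=O(\lambda^2S)$.
   Context: Group structure: $\{1,\dots,n\}$ is partitioned into disjoint nonempty index sets $\mathcal{G}_1,\dots,\mathcal{G}_r$; $x_{\mathcal{G}_i}$ is the subvector indexed by $\mathcal{G}_i$. For $\mathcal{J}\subseteq\{1,\dots,r\}$, $\|x_{\mathcal{G}_{\mathcal{J}}}\|_{p,q}:=(\sum_{i\in\mathcal{J}}\|x_{\mathcal{G}_i}\|_p^q)^{1/q}$ and $\|x\|_{p,q}:=\|x_{\mathcal{G}_{\{1,\dots,r\}}}\|_{p,q}$. For $\mathcal{J}\subseteq\{1,\dots,r\}$ and integer $N$, $\mathcal{J}(x;N)$ is the set of the $N$ indices $i\in\mathcal{J}^c$ with the largest $\|x_{\mathcal{G}_i}\|_p$ (ties broken arbitrarily). $\phi_{p,q}(S,N):=\inf\{\|Ax\|_2/\|x_{\mathcal{G}_{\mathcal{N}}}\|_{p,2}: x\ne0,\ |\mathcal{J}|\le S,\ \|x_{\mathcal{G}_{\mathcal{J}^c}}\|_{p,q}\le\|x_{\mathcal{G}_{\mathcal{J}}}\|_{p,q},\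 \mathcal{N}=\mathcal{J}(x;N)\cup\mathcal{J}\}$; the $(p,q)$-GREC$(S,N)$ holds if $\phi_{p,q}(S,N)>0$. *)

theory Defs
  imports "HOL-Analysis.Analysis"
begin

definition group_partition :: "(nat \<Rightarrow> 'n set) \<Rightarrow> nat \<Rightarrow> bool" where
  "group_partition G r \<longleftrightarrow>
     (\<forall>i\<in>{1..r}. G i \<noteq> {}) \<and>
     (\<forall>i\<in>{1..r}. \<forall>k\<in>{1..r}. i \<noteq> k \<longrightarrow> G i \<inter> G k = {}) \<and>
     (\<Union>i\<in>{1..r}. G i) = UNIV"

definition group_pnorm :: "real \<Rightarrow> (nat \<Rightarrow> 'n::finite set) \<Rightarrow> real^'n \<Rightarrow> nat \<Rightarrow> real" where
  "group_pnorm p G x i = (\<Sum>j\<in>G i. \<bar>x $ j\<bar> powr p) powr (1 / p)"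

definition mixed_norm :: "real \<Rightarrow> real \<Rightarrow> (nat \<Rightarrow> 'n::finite set) \<Rightarrow> nat set \<Rightarrow> real^'n \<Rightarrow> real" where
  "mixed_norm p q G J x = (\<Sum>i\<in>J. group_pnorm p G x i powr q) powr (1 / q)"

text \<open>T is an admissible choice of J(x;N): the N indices of J^c (or all of J^c if it has fewer
  than N elements) with the largest group norms, ties broken arbitrarily.\<close>
definition top_groups :: "real \<Rightarrow> (nat \<Rightarrow> 'n::finite set) \<Rightarrow> nat \<Rightarrow> nat set \<Rightarrow> real^'n \<Rightarrow> nat \<Rightarrow> nat set \<Rightarrow> bool" where
  "top_groups p G r J x N T \<longleftrightarrow>
     T \<subseteq> {1..r} - J \<and> card T = min N (card ({1..r} - J)) \<and>
     (\<forall>i\<in>T. \<forall>k\<in>({1..r} - J) - T. group_pnorm p G x k \<le> group_pnorm p G x i)"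

definition grec_phi :: "real^'n::finite^'m \<Rightarrow> real \<Rightarrow> real \<Rightarrow> (nat \<Rightarrow> 'n set) \<Rightarrow> nat \<Rightarrow> nat \<Rightarrow> nat \<Rightarrow> real" where
  "grec_phi A p q G r S N = Inf {norm (A *v x) / mixed_norm p 2 G Nset x | x J T Nset.
      x \<noteq> 0 \<and> J \<subseteq> {1..r} \<and> card J \<le> S \<and>
      mixed_norm p q G ({1..r} - J) x \<le> mixed_norm p q G J x \<and>
      top_groups p G r J x N T \<and> Nset = T \<union> J}"

definition grec :: "real^'n::finite^'m \<Rightarrow> real \<Rightarrow> real \<Rightarrow> (nat \<Rightarrow> 'n set) \<Rightarrow> nat \<Rightarrow> nat \<Rightarrow> nat \<Rightarrow> bool" where
  "grec A p q G r S N \<longleftrightarrow> grec_phi A p q G r S N > 0"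

definition nonzero_groups :: "(nat \<Rightarrow> 'n::finite set) \<Rightarrow> nat \<Rightarrow> real^'n \<Rightarrow> nat set" where
  "nonzero_groups G r x = {i\<in>{1..r}. \<exists>j\<in>G i. x $ j \<noteq> 0}"

end

theory Submission imports Defs begin


lemma convex_pt:
  fixes a c t p :: real
  assumes "p \<ge> 1" "a \<ge> 0" "c \<ge> 0" "0 \<le> t" "t \<le> 1"
  shows "((1-t)*a + t*c) powr p \<le> (1-t) * a powr p + t * c powr p"
proof (cases "a = 0 \<or> c = 0")
  case False
  then have "a > 0" "c > 0" using assms by auto
  then show ?thesis using convex_onD[OF powr_convex[OF assms(1)], of t a c] assms by auto
next
  case True
  have tp: "s powr p \<le> s" if "0 \<le> s" "s \<le> 1" for s :: real
    using powr_mono'[of 1 p s] that assms(1) by auto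
  show ?thesis
  proof (cases "a = 0")
    case True
    have "(t*c) powr p = t powr p * c powr p" using assms by (simp add: powr_mult)
    also have "\<dots> \<le> t * c powr p" using tp[of t] assms by (intro mult_right_mono) auto
    finally show ?thesis using True assms by simp
  next
    case False
    then have c0: "c = 0" using True by auto
    have "((1-t)*a) powr p = (1-t) powr p * a powr p" using assms by (simp add: powr_mult)
    also have "\<dots> \<le> (1-t) * a powr p" using tp[of "1-t"] assms by (intro mult_right_mono) auto
    finally show ?thesis using c0 assms by simp
  qed
qed

lemma powr_sum_zero:
  fixes u :: "'a \<Rightarrow> real"
  assumes "finite K" "(\<Sum>j\<in>K. u j powr p) powr (1/p) = 0" "j \<in> K"
  shows "u j = 0"
proof -
  have "(\<Sum>j\<in>K. u j powr p) = 0" using assms(2) by simp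
  then have "\<forall>j\<in>K. u j powr p = 0" using assms(1) by (subst sum_nonneg_eq_0_iff[symmetric]) auto
  then show ?thesis using assms(3) by auto
qed

lemma powr_sum_pow:
  fixes u :: "'a \<Rightarrow> real"
  assumes "p > 0"
  shows "((\<Sum>j\<in>K. u j powr p) powr (1/p)) powr p = (\<Sum>j\<in>K. u j powr p)"
  using assms by (simp add: powr_powr sum_nonneg)

lemma minkowski:
  fixes u v :: "'a \<Rightarrow> real"
  assumes fin: "finite K" and p: "p \<ge> 1" and u: "\<And>j. u j \<ge> 0" and v: "\<And>j. v j \<ge> 0"
  shows "(\<Sum>j\<in>K. (u j + v j) powr p) powr (1/p)
     \<le> (\<Sum>j\<in>K. u j powr p) powr (1/p) + (\<Sum>j\<in>K. v j powr p) powr (1/p)"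
proof -
  define a where "a = (\<Sum>j\<in>K. u j powr p) powr (1/p)"
  define c where "c = (\<Sum>j\<in>K. v j powr p) powr (1/p)"
  have a0: "a \<ge> 0" and c0: "c \<ge> 0" unfolding a_def c_def by auto
  show ?thesis
  proof (cases "a = 0 \<or> c = 0")
    case True
    then show ?thesis
    proof
      assume "a = 0"
      then have "\<And>j. j \<in> K \<Longrightarrow> u j = 0" using powr_sum_zero[OF fin] unfolding a_def by blast
      then have "(\<Sum>j\<in>K. (u j + v j) powr p) = (\<Sum>j\<in>K. v j powr p)" by (intro sum.cong) auto
      then show ?thesis using \<open>a = 0\<close> unfolding a_def c_def by simp
    next
      assume "c = 0"
      then have "\<And>j. j \<in> K \<Longrightarrow> v j = 0" using powr_sum_zero[OF fin] unfolding c_def by blast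
      then have "(\<Sum>j\<in>K. (u j + v j) powr p) = (\<Sum>j\<in>K. u j powr p)" by (intro sum.cong) auto
      then show ?thesis using \<open>c = 0\<close> unfolding a_def c_def by simp
    qed
  next
    case False
    then have ap: "a > 0" and cp: "c > 0" using a0 c0 by auto
    define t where "t = c / (a + c)"
    have t0: "0 \<le> t" "t \<le> 1" "1 - t = a / (a+c)" using ap cp unfolding t_def by (auto simp: field_simps)
    have pa: "a powr p = (\<Sum>j\<in>K. u j powr p)" unfolding a_def using p by (intro powr_sum_pow) auto
    have pc: "c powr p = (\<Sum>j\<in>K. v j powr p)" unfolding c_def using p by (intro powr_sum_pow) auto
    have pt: "(u j + v j) powr p \<le> (a+c) powr p * ((1-t) * (u j / a) powr p + t * (v j / c) powr p)" for j
    proof -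
      have ac: "a + c > 0" using ap cp by simp
      have e1: "(a/(a+c)) * (u j / a) = u j / (a+c)" using ap ac by simp
      have e2: "(c/(a+c)) * (v j / c) = v j / (a+c)" using cp ac by simp
      have "(a + c) * ((a/(a+c)) * (u j / a) + (c/(a+c)) * (v j / c)) = u j + v j"
        unfolding e1 e2 using ac by (simp add: add_divide_distrib[symmetric])
      then have "u j + v j = (a + c) * ((1-t) * (u j / a) + t * (v j / c))"
        using t0(3) unfolding t_def by simp
      then have "(u j + v j) powr p = (a+c) powr p * ((1-t) * (u j / a) + t * (v j / c)) powr p"
        using ap cp t0 u v by (simp add: powr_mult)
      also have "\<dots> \<le> (a+c) powr p * ((1-t) * (u j / a) powr p + t * (v j / c) powr p)"
        using convex_pt[OF p, of "u j / a" "v j / c" t] ap cp u v t0 by (intro mult_left_mono) auto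
      finally show ?thesis .
    qed
    have "(\<Sum>j\<in>K. (u j + v j) powr p) \<le> (\<Sum>j\<in>K. (a+c) powr p * ((1-t) * (u j / a) powr p + t * (v j / c) powr p))"
      by (intro sum_mono pt)
    also have "\<dots> = (a+c) powr p * ((1-t) * (\<Sum>j\<in>K. u j powr p) / a powr p + t * (\<Sum>j\<in>K. v j powr p) / c powr p)"
      using ap cp u v
      by (simp add: powr_divide sum_distrib_left sum_divide_distrib sum.distrib algebra_simps)
    also have "\<dots> = (a+c) powr p" unfolding pa[symmetric] pc[symmetric] using ap cp by simp
    finally have "(\<Sum>j\<in>K. (u j + v j) powr p) \<le> (a+c) powr p" .
    then have "(\<Sum>j\<in>K. (u j + v j) powr p) powr (1/p) \<le> ((a+c) powr p) powr (1/p)"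
      using p by (intro powr_mono2) (auto intro: sum_nonneg)
    also have "\<dots> = a + c" using ap cp p by (simp add: powr_powr)
    finally show ?thesis unfolding a_def c_def .
  qed
qed

lemma l2_le_lp:
  fixes u :: "'a \<Rightarrow> real"
  assumes fin: "finite K" and p: "1 \<le> p" "p \<le> 2" and u: "\<And>j. u j \<ge> 0"
  shows "(\<Sum>j\<in>K. (u j)\<^sup>2) \<le> ((\<Sum>j\<in>K. u j powr p) powr (1/p))\<^sup>2"
proof -
  define a where "a = (\<Sum>j\<in>K. u j powr p) powr (1/p)"
  show ?thesis
  proof (cases "a = 0")
    case True
    then have "\<And>j. j \<in> K \<Longrightarrow> u j = 0" using powr_sum_zero[OF fin] unfolding a_def by blast
    then show ?thesis using True unfolding a_def by simp
  next
    case False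
    then have ap: "a > 0" unfolding a_def by (simp add: less_le)
    have pa: "a powr p = (\<Sum>j\<in>K. u j powr p)" unfolding a_def using p by (intro powr_sum_pow) auto
    have le: "u j \<le> a" if "j \<in> K" for j
    proof -
      have up: "u j powr p \<le> a powr p" unfolding pa using fin that u
        by (intro member_le_sum) auto
      have m: "(u j powr p) powr (1/p) \<le> (a powr p) powr (1/p)"
        by (rule powr_mono2[OF _ _ up]) (use p in auto)
      have "p \<noteq> 0" using p by simp
      then show ?thesis using m ap u[of j] by (simp add: powr_powr)
    qed
    have "(\<Sum>j\<in>K. (u j)\<^sup>2) = a\<^sup>2 * (\<Sum>j\<in>K. (u j / a) powr 2)"
      using ap u by (simp add: sum_distrib_left power_divide powr_divide field_simps)
    also have "\<dots> \<le> a\<^sup>2 * (\<Sum>j\<in>K. (u j / a) powr p)"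
      using ap u le p by (intro mult_left_mono sum_mono powr_mono') auto
    also have "\<dots> = a\<^sup>2 * ((\<Sum>j\<in>K. u j powr p) / a powr p)"
      using ap u by (simp add: powr_divide sum_divide_distrib)
    also have "\<dots> = a\<^sup>2" unfolding pa[symmetric] using ap by simp
    finally show ?thesis unfolding a_def .
  qed
qed


lemma gp_nonneg: "group_pnorm p G x i \<ge> 0"
  unfolding group_pnorm_def by simp

lemma gp_triangle:
  assumes "p \<ge> 1"
  shows "group_pnorm p G (x + y) i \<le> group_pnorm p G x i + group_pnorm p G y i"
proof -
  have "group_pnorm p G (x + y) i \<le> (\<Sum>j\<in>G i. (\<bar>x $ j\<bar> + \<bar>y $ j\<bar>) powr p) powr (1/p)"
    unfolding group_pnorm_def using assms
    by (intro powr_mono2 sum_mono) (auto intro!: sum_nonneg abs_triangle_ineq)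
  also have "\<dots> \<le> group_pnorm p G x i + group_pnorm p G y i"
    unfolding group_pnorm_def by (rule minkowski[OF finite assms]) auto
  finally show ?thesis .
qed

lemma gp_uminus: "group_pnorm p G (- x) i = group_pnorm p G x i"
  unfolding group_pnorm_def by simp

lemma mixed1: "mixed_norm p 1 G J x = (\<Sum>i\<in>J. group_pnorm p G x i)"
  unfolding mixed_norm_def by (simp add: gp_nonneg powr_one sum_nonneg)

lemma pow2: "(y::real) \<ge> 0 \<Longrightarrow> y powr 2 = y\<^sup>2"
  by (cases "y = 0") (auto simp: powr_realpow[where n=2, simplified])

lemma mixed2: "mixed_norm p 2 G J x = sqrt (\<Sum>i\<in>J. (group_pnorm p G x i)\<^sup>2)"
  unfolding mixed_norm_def by (simp add: gp_nonneg pow2 powr_half_sqrt sum_nonneg)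

lemma exists_top:
  fixes f :: "nat \<Rightarrow> real"
  assumes "finite K" "n \<le> card K"
  shows "\<exists>T. T \<subseteq> K \<and> card T = n \<and> (\<forall>i\<in>T. \<forall>k\<in>K - T. f k \<le> f i)"
  using assms(2)
proof (induction n)
  case 0
  then show ?case by auto
next
  case (Suc n)
  then obtain T where T: "T \<subseteq> K" "card T = n" "\<forall>i\<in>T. \<forall>k\<in>K - T. f k \<le> f i" by auto
  have fT: "finite T" using T(1) assms(1) finite_subset by blast
  have "K - T \<noteq> {}" using T Suc.prems fT
    by (metis Diff_eq_empty_iff card_mono assms(1) not_less_eq_eq subset_antisym)
  moreover have "finite (K - T)" using assms(1) by simp
  ultimately have "Max (f ` (K - T)) \<in> f ` (K - T)" by (intro Max_in) auto
  then obtain m where m1: "m \<in> K - T" "f m = Max (f ` (K - T))" by auto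
  have m: "m \<in> K - T" "\<forall>k\<in>K - T. f k \<le> f m"
    using m1 \<open>finite (K - T)\<close> by auto
  show ?case
    by (rule exI[of _ "insert m T"]) (use T m fT in auto)
qed


lemma norm_le_groups:
  fixes h :: "real^'n"
  assumes gp: "group_partition G r" and p: "1 \<le> p" "p \<le> 2"
  shows "(norm h)\<^sup>2 \<le> (\<Sum>i\<in>{1..r}. (group_pnorm p G h i)\<^sup>2)"
proof -
  have "(norm h)\<^sup>2 = (\<Sum>j\<in>UNIV. (h $ j)\<^sup>2)"
    unfolding norm_vec_def L2_set_def by (simp add: sum_nonneg)
  also have "\<dots> = (\<Sum>j\<in>(\<Union>i\<in>{1..r}. G i). (h $ j)\<^sup>2)"
    using gp unfolding group_partition_def by simp
  also have "\<dots> = (\<Sum>i\<in>{1..r}. \<Sum>j\<in>G i. (h $ j)\<^sup>2)"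
    using gp unfolding group_partition_def by (intro sum.UNION_disjoint) auto
  also have "\<dots> \<le> (\<Sum>i\<in>{1..r}. (group_pnorm p G h i)\<^sup>2)"
  proof (intro sum_mono)
    fix i
    have "(\<Sum>j\<in>G i. (h $ j)\<^sup>2) = (\<Sum>j\<in>G i. \<bar>h $ j\<bar>\<^sup>2)" by simp
    also have "\<dots> \<le> (group_pnorm p G h i)\<^sup>2"
      unfolding group_pnorm_def by (rule l2_le_lp[OF finite p]) auto
    finally show "(\<Sum>j\<in>G i. (h $ j)\<^sup>2) \<le> (group_pnorm p G h i)\<^sup>2" .
  qed
  finally show ?thesis .
qed

theorem corollary2p1:
  fixes A :: "real^'n^'m" and G :: "nat \<Rightarrow> 'n set" and r S :: nat
    and p lambda :: real and xbar xstar :: "real^'n" and b :: "real^'m"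
  assumes "group_partition G r"
    and "1 \<le> p" and "p \<le> 2"
    and "S \<ge> 1" and "card (nonzero_groups G r xbar) = S"
    and "b = A *v xbar"
    and "grec A p 1 G r S S"
    and "lambda > 0"
    and "\<forall>x. (norm (A *v xstar - b))\<^sup>2 + lambda * mixed_norm p 1 G {1..r} xstar
             \<le> (norm (A *v x - b))\<^sup>2 + lambda * mixed_norm p 1 G {1..r} x"
  shows "(norm (xstar - xbar))\<^sup>2 \<le> 2 * lambda\<^sup>2 * real S / (grec_phi A p 1 G r S S) ^ 4"
proof -
  note gpart = assms(1) and p = assms(2,3) and lam = assms(8)
  define h where "h = xstar - xbar"
  define J where "J = nonzero_groups G r xbar"
  define g where "g = group_pnorm p G h"
  define phi where "phi = grec_phi A p 1 G r S S"
  have phi0: "phi > 0" using assms(7) unfolding grec_def phi_def by simp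
  have Jsub: "J \<subseteq> {1..r}" unfolding J_def nonzero_groups_def by auto
  have finJ: "finite J" using Jsub finite_subset by blast
  have cardJ: "card J = S" using assms(5) J_def by simp
  have g0: "\<And>i. g i \<ge> 0" unfolding g_def by (rule gp_nonneg)
  define M where "M x = (\<Sum>i\<in>{1..r}. group_pnorm p G x i)" for x
  have opt: "(norm (A *v h))\<^sup>2 + lambda * M xstar \<le> lambda * M xbar"
  proof -
    have "A *v xstar - b = A *v h" unfolding h_def assms(6) by (simp add: matrix_vector_mult_diff_distrib)
    then show ?thesis using spec[OF assms(9), of xbar] unfolding assms(6) M_def mixed1 by simp
  qed
  have outside: "group_pnorm p G xstar i = g i" "group_pnorm p G xbar i = 0"
    if "i \<in> {1..r} - J" for i
  proof -
    have z: "\<And>j. j \<in> G i \<Longrightarrow> xbar $ j = 0" using that unfolding J_def nonzero_groups_def by auto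
    show "group_pnorm p G xstar i = g i" unfolding g_def group_pnorm_def h_def
      by (intro arg_cong[where f="\<lambda>s. s powr (1/p)"] sum.cong) (auto simp: z)
    show "group_pnorm p G xbar i = 0" unfolding group_pnorm_def using p by (simp add: z)
  qed
  have inside: "group_pnorm p G xbar i \<le> group_pnorm p G xstar i + g i" for i
  proof -
    have "xbar = xstar + (- h)" unfolding h_def by simp
    then have "group_pnorm p G xbar i \<le> group_pnorm p G xstar i + group_pnorm p G (- h) i"
      using gp_triangle[OF p(1), of G xstar "- h" i] by simp
    then show ?thesis unfolding g_def gp_uminus .
  qed
  define K where "K = {1..r} - J"
  have splitM: "M x = (\<Sum>i\<in>J. group_pnorm p G x i) + (\<Sum>i\<in>K. group_pnorm p G x i)" for x
    unfolding M_def K_def using Jsub by (simp add: sum.subset_diff)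
  have Mstar: "M xstar = (\<Sum>i\<in>J. group_pnorm p G xstar i) + (\<Sum>i\<in>K. g i)"
    unfolding splitM K_def by (simp add: outside)
  have Mbar: "M xbar = (\<Sum>i\<in>J. group_pnorm p G xbar i)"
    unfolding splitM K_def by (simp add: outside)
  have "M xbar \<le> M xstar + (\<Sum>i\<in>J. g i) - (\<Sum>i\<in>K. g i)"
    unfolding Mbar Mstar using sum_mono[of J "group_pnorm p G xbar" "\<lambda>i. group_pnorm p G xstar i + g i", OF inside]
    by (simp add: sum.distrib)
  with opt lam have key: "(norm (A *v h))\<^sup>2 + lambda * (\<Sum>i\<in>K. g i) \<le> lambda * (\<Sum>i\<in>J. g i)"
    by (smt (verit, best) mult_left_mono right_diff_distrib distrib_left)
  define bJ where "bJ = (\<Sum>i\<in>J. g i)"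
  have sK0: "(\<Sum>i\<in>K. g i) \<ge> 0" using g0 by (simp add: sum_nonneg)
  have AhbJ: "(norm (A *v h))\<^sup>2 \<le> lambda * bJ" using key sK0 lam unfolding bJ_def
    by (smt (verit) mult_nonneg_nonneg)
  have cone: "(\<Sum>i\<in>K. g i) \<le> bJ" using key lam unfolding bJ_def
    by (smt (verit) mult_le_cancel_left_pos zero_le_power2)
  show ?thesis
  proof (cases "h = 0")
    case True
    then show ?thesis using phi0 lam unfolding phi_def[symmetric] h_def by simp
  next
    case False
    have finK: "finite K" unfolding K_def by simp
    obtain T where T: "T \<subseteq> K" "card T = min S (card K)" "\<forall>i\<in>T. \<forall>k\<in>K - T. g k \<le> g i"
      using exists_top[OF finK, of "min S (card K)" g] by auto
    have top: "top_groups p G r J h S T" unfolding top_groups_def K_def[symmetric] g_def[symmetric]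
      using T by simp
    define N where "N = T \<union> J"
    define D2 where "D2 = (\<Sum>i\<in>N. (g i)\<^sup>2)"
    have D20: "D2 \<ge> 0" unfolding D2_def by (simp add: sum_nonneg)
    have mem: "norm (A *v h) / mixed_norm p 2 G N h \<in>
      {norm (A *v x) / mixed_norm p 2 G Nset x | x J T Nset.
      x \<noteq> 0 \<and> J \<subseteq> {1..r} \<and> card J \<le> S \<and>
      mixed_norm p 1 G ({1..r} - J) x \<le> mixed_norm p 1 G J x \<and>
      top_groups p G r J x S T \<and> Nset = T \<union> J}"
      using False Jsub cardJ cone top unfolding mixed1 N_def bJ_def g_def K_def by blast
    have bdd: "bdd_below {norm (A *v x) / mixed_norm p 2 G Nset x | x J T Nset.
      x \<noteq> 0 \<and> J \<subseteq> {1..r} \<and> card J \<le> S \<and>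
      mixed_norm p 1 G ({1..r} - J) x \<le> mixed_norm p 1 G J x \<and>
      top_groups p G r J x S T \<and> Nset = T \<union> J}"
      by (rule bdd_belowI[of _ 0]) (auto simp: mixed2 intro!: divide_nonneg_nonneg sum_nonneg)
    have phile: "phi \<le> norm (A *v h) / sqrt D2"
      using cInf_lower[OF mem bdd] unfolding phi_def grec_phi_def mixed2 D2_def g_def .
    have D2p: "D2 > 0"
    proof (rule ccontr)
      assume "\<not> D2 > 0" then have "D2 = 0" using D20 by simp
      then show False using phile phi0 by simp
    qed
    have "phi * sqrt D2 \<le> norm (A *v h)" using phile D2p by (simp add: pos_le_divide_eq)
    then have "(phi * sqrt D2)\<^sup>2 \<le> (norm (A *v h))\<^sup>2" using phi0 D2p by (intro power_mono) auto
    then have s1: "phi\<^sup>2 * D2 \<le> lambda * bJ" using AhbJ D20 by (simp add: power_mult_distrib)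
    have TJ: "T \<inter> J = {}" using T(1) unfolding K_def by auto
    have finT: "finite T" using T(1) finK finite_subset by blast
    have bJ2: "bJ\<^sup>2 \<le> S * (\<Sum>i\<in>J. (g i)\<^sup>2)"
      using sum_squared_le_sum_of_squares[of g J] cardJ unfolding bJ_def by (simp add: mult.commute)
    have "(\<Sum>i\<in>J. (g i)\<^sup>2) \<le> D2" unfolding D2_def N_def using finT finJ
      by (intro sum_mono2) auto
    with bJ2 have bJ2': "bJ\<^sup>2 \<le> S * D2" by (smt (verit) mult_left_mono of_nat_0_le_iff)
    have bJ0: "bJ \<ge> 0" unfolding bJ_def using g0 by (simp add: sum_nonneg)
    have "(phi\<^sup>2 * D2)\<^sup>2 \<le> (lambda * bJ)\<^sup>2" using s1 phi0 D20 by (intro power_mono) auto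
    also have "\<dots> = lambda\<^sup>2 * bJ\<^sup>2" by (simp add: power_mult_distrib)
    also have "\<dots> \<le> lambda\<^sup>2 * (S * D2)" using bJ2' by (intro mult_left_mono) auto
    finally have "phi^4 * D2 * D2 \<le> (lambda\<^sup>2 * S) * D2" by (simp add: power2_eq_square algebra_simps power4_eq_xxxx)
    then have main: "phi^4 * D2 \<le> lambda\<^sup>2 * S" using D2p by simp
    define R where "R = {1..r} - N"
    have tail: "(\<Sum>i\<in>R. (g i)\<^sup>2) \<le> D2"
    proof (cases "card K \<le> S")
      case True
      then have "card T = card K" using T(2) by simp
      then have "T = K" using T(1) finK by (simp add: card_subset_eq)
      then have "R = {}" unfolding R_def N_def K_def by auto
      then show ?thesis using D20 by simp
    next
      case False
      then have cT: "card T = S" using T(2) by simp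
      define aT where "aT = (\<Sum>i\<in>T. g i)"
      have RK: "R \<subseteq> K - T" unfolding R_def N_def K_def by auto
      have gk: "S * g k \<le> aT" if "k \<in> R" for k
      proof -
        have "(\<Sum>i\<in>T. g k) \<le> aT" unfolding aT_def using T(3) RK that by (intro sum_mono) auto
        then show ?thesis using cT by simp
      qed
      have Sp: "real S > 0" using assms(4) by simp
      have "(\<Sum>i\<in>R. (g i)\<^sup>2) \<le> (\<Sum>i\<in>R. (aT / S) * g i)"
      proof (intro sum_mono)
        fix i assume "i \<in> R"
        then have "g i \<le> aT / S" using gk Sp by (simp add: pos_le_divide_eq mult.commute)
        then have "g i * g i \<le> aT / S * g i" using g0[of i] by (rule mult_right_mono)
        then show "(g i)\<^sup>2 \<le> aT / S * g i" by (simp add: power2_eq_square)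
      qed
      also have "\<dots> = (aT / S) * (\<Sum>i\<in>R. g i)" by (simp add: sum_distrib_left)
      also have "\<dots> \<le> (aT / S) * bJ"
      proof (intro mult_left_mono)
        have "(\<Sum>i\<in>R. g i) \<le> (\<Sum>i\<in>K. g i)" using RK finK g0 by (intro sum_mono2) auto
        then show "(\<Sum>i\<in>R. g i) \<le> bJ" using cone by simp
        show "0 \<le> aT / S" unfolding aT_def using g0 by (simp add: sum_nonneg)
      qed
      also have "\<dots> \<le> (aT\<^sup>2 + bJ\<^sup>2) / (2 * S)"
      proof -
        have "0 \<le> (aT - bJ)\<^sup>2" by simp
        then have "2 * (aT * bJ) \<le> aT\<^sup>2 + bJ\<^sup>2" by (simp add: power2_diff)
        then have "(2 * (aT * bJ)) / (2 * S) \<le> (aT\<^sup>2 + bJ\<^sup>2) / (2 * S)" using Sp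
          by (intro divide_right_mono) auto
        then show ?thesis by simp
      qed
      also have "\<dots> \<le> (S * (\<Sum>i\<in>T. (g i)\<^sup>2) + S * (\<Sum>i\<in>J. (g i)\<^sup>2)) / (2 * S)"
      proof -
        have "aT\<^sup>2 \<le> S * (\<Sum>i\<in>T. (g i)\<^sup>2)"
          using sum_squared_le_sum_of_squares[of g T] cT unfolding aT_def by (simp add: mult.commute)
        with bJ2 show ?thesis using Sp by (intro divide_right_mono) auto
      qed
      also have "\<dots> = D2 / 2" unfolding D2_def N_def using Sp TJ finT finJ
        by (simp add: sum.union_disjoint field_simps)
      finally show ?thesis using D20 by simp
    qed
    have "(norm h)\<^sup>2 \<le> (\<Sum>i\<in>{1..r}. (g i)\<^sup>2)" unfolding g_def by (rule norm_le_groups[OF gpart p])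
    also have "\<dots> = D2 + (\<Sum>i\<in>R. (g i)\<^sup>2)"
    proof -
      have "N \<subseteq> {1..r}" unfolding N_def using T(1) Jsub unfolding K_def by auto
      then show ?thesis unfolding D2_def R_def by (simp add: sum.subset_diff)
    qed
    also have "\<dots> \<le> 2 * D2" using tail by simp
    also have "\<dots> \<le> 2 * lambda\<^sup>2 * real S / phi ^ 4" using main phi0
      by (simp add: pos_le_divide_eq mult.commute mult.left_commute)
    finally show ?thesis unfolding h_def phi_def .
  qed
qed

end
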